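(* In a symmetric instance with $k$ signals ($2\le k\le n$), a symmetric scheme $\varphi$ is persuasive if and only if $u_{\mathcal R}(\varphi)\ge\rho_E$, where $u_{\mathcal R}(\varphi)$ is the receiver's expected utility when she follows the recommendations of $\varphi$.
   Context: Model: a receiver chooses one of the actions $[n]$; each action $i$ has a type $\theta_i$; the state $\boldsymbol\theta=(\theta_1,\dots,\theta_n)$ is drawn from a commonly known distribution $q$ over a finite set of type vectors; each type $t$ has receiver value $\rho(t)$ and sender value $\xi(t)$. A direct scheme with $k$ signals maps each state to a distribution over $k$ signals, each signal recommending an action; it is persuasive if for every signal $\sigma$ sent with positive probability and recommending $i$, $\mathbb E[\rho(\theta_i)\mid\sigma]\ge\mathbb E[\rho(\theta_j)\mid\sigma]$ for all $j\in[n]$. $\rho_E=\max_i\sum_{\boldsymbol\theta}q_{\boldsymbol\theta}\rho(\theta_i)$. Symmetric instance: $q_{\boldsymbol\theta}=q_{\boldsymbol\theta'}$ whenever $\boldsymbol\theta'$ is a permutation of $\boldsymbol\theta$. For a permutation $\pi$ of $[n]$ let $(\pi\cdot\boldsymbol\theta)_{\pi(l)}=\theta_l$. A symmetric scheme is a direct scheme with $k$ signals whose signals recommend the distinct actions $1,\dots,k$ and which satisfies $\varphi(\pi\cdot\boldsymbol\theta,\pi(i))=\varphi(\boldsymbol\theta,i)$ for every state $\boldsymbol\theta$, every $i\in[k]$ and every permutation $\pi$ of $[n]$ with $\pi([k])=[k]$ (here $\varphi(\boldsymbol\theta,i)$ is the probability of recommending $i$ in state $\boldsymbol\theta$). *)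

theory Defs
  imports "HOL-Probability.Probability_Mass_Function" "HOL-Combinatorics.Permutations"
begin

(* Actions are 0..<n (instead of 1..n); a state is a list of n types,
   state ! i = type of action i.  The prior q is a pmf over states. *)

definition perm_act :: "(nat \<Rightarrow> nat) \<Rightarrow> 'a list \<Rightarrow> 'a list" where
  "perm_act \<pi> \<theta> = map (\<lambda>j. \<theta> ! inv \<pi> j) [0..<length \<theta>]"

definition valid_prior :: "nat \<Rightarrow> 'a list pmf \<Rightarrow> bool" where
  "valid_prior n q \<longleftrightarrow> finite (set_pmf q) \<and> (\<forall>\<theta>\<in>set_pmf q. length \<theta> = n)"

definition symmetric_instance :: "nat \<Rightarrow> 'a list pmf \<Rightarrow> bool" where
  "symmetric_instance n q \<longleftrightarrow>
     (\<forall>\<theta> \<pi>. length \<theta> = n \<longrightarrow> \<pi> permutes {..<n} \<longrightarrow> pmf q (perm_act \<pi> \<theta>) = pmf q \<theta>)"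

(* A scheme with k signals whose signal i (i<k) recommends action i:
   phi \<theta> i = probability of sending signal i (recommending action i) in state \<theta>. *)
definition scheme_k :: "nat \<Rightarrow> nat \<Rightarrow> ('a list \<Rightarrow> nat \<Rightarrow> real) \<Rightarrow> bool" where
  "scheme_k n k \<phi> \<longleftrightarrow>
     (\<forall>\<theta>. length \<theta> = n \<longrightarrow> (\<forall>i<k. \<phi> \<theta> i \<ge> 0) \<and> (\<Sum>i<k. \<phi> \<theta> i) = 1)"

definition symmetric_scheme :: "nat \<Rightarrow> nat \<Rightarrow> ('a list \<Rightarrow> nat \<Rightarrow> real) \<Rightarrow> bool" where
  "symmetric_scheme n k \<phi> \<longleftrightarrow> scheme_k n k \<phi> \<and>
     (\<forall>\<theta> i \<pi>. length \<theta> = n \<longrightarrow> i < k \<longrightarrow> \<pi> permutes {..<n} \<longrightarrow> \<pi> ` {..<k} = {..<k} \<longrightarrow>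
        \<phi> (perm_act \<pi> \<theta>) (\<pi> i) = \<phi> \<theta> i)"

definition sig_prob :: "'a list pmf \<Rightarrow> ('a list \<Rightarrow> nat \<Rightarrow> real) \<Rightarrow> nat \<Rightarrow> real" where
  "sig_prob q \<phi> s = (\<Sum>\<theta>\<in>set_pmf q. pmf q \<theta> * \<phi> \<theta> s)"

definition cond_exp :: "'a list pmf \<Rightarrow> ('a \<Rightarrow> real) \<Rightarrow> ('a list \<Rightarrow> nat \<Rightarrow> real) \<Rightarrow> nat \<Rightarrow> nat \<Rightarrow> real" where
  "cond_exp q \<rho> \<phi> s j = (\<Sum>\<theta>\<in>set_pmf q. pmf q \<theta> * \<phi> \<theta> s * \<rho> (\<theta> ! j)) / sig_prob q \<phi> s"

definition persuasive :: "nat \<Rightarrow> nat \<Rightarrow> 'a list pmf \<Rightarrow> ('a \<Rightarrow> real) \<Rightarrow> ('a list \<Rightarrow> nat \<Rightarrow> real) \<Rightarrow> bool" where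
  "persuasive n k q \<rho> \<phi> \<longleftrightarrow>
     (\<forall>i<k. sig_prob q \<phi> i > 0 \<longrightarrow> (\<forall>j<n. cond_exp q \<rho> \<phi> i i \<ge> cond_exp q \<rho> \<phi> i j))"

definition receiver_utility :: "nat \<Rightarrow> 'a list pmf \<Rightarrow> ('a \<Rightarrow> real) \<Rightarrow> ('a list \<Rightarrow> nat \<Rightarrow> real) \<Rightarrow> real" where
  "receiver_utility k q \<rho> \<phi> = (\<Sum>\<theta>\<in>set_pmf q. pmf q \<theta> * (\<Sum>i<k. \<phi> \<theta> i * \<rho> (\<theta> ! i)))"

definition rho_E :: "nat \<Rightarrow> 'a list pmf \<Rightarrow> ('a \<Rightarrow> real) \<Rightarrow> real" where
  "rho_E n q \<rho> = Max ((\<lambda>i. \<Sum>\<theta>\<in>set_pmf q. pmf q \<theta> * \<rho> (\<theta> ! i)) ` {..<n})"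

end

theory Submission
  imports Defs
begin

lemma perm_act_len[simp]: "length (perm_act \<pi> \<theta>) = length \<theta>"
  by (simp add: perm_act_def)

lemma perm_act_nth: "j < length \<theta> \<Longrightarrow> perm_act \<pi> \<theta> ! j = \<theta> ! inv \<pi> j"
  by (simp add: perm_act_def)

lemma perm_act_app:
  assumes "\<pi> permutes {..<length \<theta>}" "j < length \<theta>"
  shows "perm_act \<pi> \<theta> ! (\<pi> j) = \<theta> ! j"
proof -
  have "\<pi> j < length \<theta>" using assms permutes_in_image by fastforce
  thus ?thesis using assms by (simp add: perm_act_nth permutes_inverses)
qed

lemma perm_act_inv:
  assumes "\<pi> permutes {..<length \<theta>}"
  shows "perm_act (inv \<pi>) (perm_act \<pi> \<theta>) = \<theta>"
proof (rule nth_equalityI)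
  fix j assume j: "j < length (perm_act (inv \<pi>) (perm_act \<pi> \<theta>))"
  hence "j < length \<theta>" by simp
  thus "perm_act (inv \<pi>) (perm_act \<pi> \<theta>) ! j = \<theta> ! j"
    using assms by (simp add: perm_act_nth permutes_inv_inv perm_act_app)
qed simp

lemma pmf_perm:
  assumes "symmetric_instance n q" "\<pi> permutes {..<n}" "length \<theta> = n"
  shows "pmf q (perm_act \<pi> \<theta>) = pmf q \<theta>"
  using assms unfolding symmetric_instance_def by blast

lemma sum_reindex:
  assumes vp: "valid_prior n q" and si: "symmetric_instance n q" and p: "\<pi> permutes {..<n}"
  shows "(\<Sum>\<theta>\<in>set_pmf q. f (perm_act \<pi> \<theta>)) = (\<Sum>\<theta>\<in>set_pmf q. f \<theta>)"
proof (rule sum.reindex_bij_witness[where i="perm_act (inv \<pi>)" and j="perm_act \<pi>"])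
  have len: "\<And>a. a \<in> set_pmf q \<Longrightarrow> length a = n" using vp unfolding valid_prior_def by blast
  have pi: "inv \<pi> permutes {..<n}" using p permutes_inv by blast
  show "\<And>a. a \<in> set_pmf q \<Longrightarrow> perm_act (inv \<pi>) (perm_act \<pi> a) = a"
    using len p perm_act_inv by metis
  show "\<And>a. a \<in> set_pmf q \<Longrightarrow> perm_act \<pi> a \<in> set_pmf q"
    using len pmf_perm[OF si p] by (simp add: set_pmf_iff)
  show "\<And>a. a \<in> set_pmf q \<Longrightarrow> perm_act \<pi> (perm_act (inv \<pi>) a) = a"
  proof -
    fix a assume "a \<in> set_pmf q"
    hence "length a = n" using len by blast
    thus "perm_act \<pi> (perm_act (inv \<pi>) a) = a"
      using perm_act_inv[of "inv \<pi>" a] pi p permutes_inv_inv by metis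
  qed
  show "\<And>a. a \<in> set_pmf q \<Longrightarrow> perm_act (inv \<pi>) a \<in> set_pmf q"
    using len pmf_perm[OF si pi] by (simp add: set_pmf_iff)
qed simp

theorem lemma3p3:
  fixes n k :: nat and q :: "'a list pmf" and \<rho> \<xi> :: "'a \<Rightarrow> real"
    and \<phi> :: "'a list \<Rightarrow> nat \<Rightarrow> real"
  assumes "valid_prior n q" and "symmetric_instance n q"
    and "2 \<le> k" and "k \<le> n"
    and "symmetric_scheme n k \<phi>"
  shows "persuasive n k q \<rho> \<phi> \<longleftrightarrow> receiver_utility k q \<rho> \<phi> \<ge> rho_E n q \<rho>"
proof -
  note vp = assms(1) and si = assms(2) and k2 = assms(3) and kn = assms(4) and ss = assms(5)
  define S where "S = set_pmf q"
  have finS: "finite S" using vp unfolding valid_prior_def S_def by blast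
  have len: "\<And>\<theta>. \<theta> \<in> S \<Longrightarrow> length \<theta> = n" using vp unfolding valid_prior_def S_def by blast
  have sch: "\<And>\<theta>. \<theta> \<in> S \<Longrightarrow> (\<Sum>i<k. \<phi> \<theta> i) = 1"
    using ss len unfolding symmetric_scheme_def scheme_k_def by blast
  have phsym: "\<And>\<theta> i \<pi>. length \<theta> = n \<Longrightarrow> i < k \<Longrightarrow> \<pi> permutes {..<n} \<Longrightarrow> \<pi> ` {..<k} = {..<k} \<Longrightarrow>
        \<phi> (perm_act \<pi> \<theta>) (\<pi> i) = \<phi> \<theta> i"
    using ss unfolding symmetric_scheme_def by blast
  define M where "M i j = (\<Sum>\<theta>\<in>S. pmf q \<theta> * \<phi> \<theta> i * \<rho> (\<theta> ! j))" for i j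
  define \<mu> where "\<mu> j = (\<Sum>\<theta>\<in>S. pmf q \<theta> * \<rho> (\<theta> ! j))" for j
  define P where "P i = sig_prob q \<phi> i" for i
  have Pdef: "P i = (\<Sum>\<theta>\<in>S. pmf q \<theta> * \<phi> \<theta> i)" for i
    unfolding P_def sig_prob_def S_def by simp
  have Msym: "M (\<pi> i) (\<pi> j) = M i j" if p: "\<pi> permutes {..<n}" and im: "\<pi> ` {..<k} = {..<k}"
    and i: "i < k" and j: "j < n" for \<pi> i j
  proof -
    have "M i j = (\<Sum>\<theta>\<in>S. (\<lambda>\<theta>. pmf q \<theta> * \<phi> \<theta> (\<pi> i) * \<rho> (\<theta> ! (\<pi> j))) (perm_act \<pi> \<theta>))"
      unfolding M_def
      by (rule sum.cong, simp, simp add: pmf_perm[OF si p] len phsym[OF _ i p im] perm_act_app p j)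
    also have "\<dots> = M (\<pi> i) (\<pi> j)" unfolding M_def S_def by (rule sum_reindex[OF vp si p])
    finally show ?thesis by simp
  qed
  have Psym: "P (\<pi> i) = P i" if p: "\<pi> permutes {..<n}" and im: "\<pi> ` {..<k} = {..<k}"
    and i: "i < k" for \<pi> i
  proof -
    have "P i = (\<Sum>\<theta>\<in>S. (\<lambda>\<theta>. pmf q \<theta> * \<phi> \<theta> (\<pi> i)) (perm_act \<pi> \<theta>))"
      unfolding Pdef
      by (rule sum.cong, simp, simp add: pmf_perm[OF si p] len phsym[OF _ i p im])
    also have "\<dots> = P (\<pi> i)" unfolding Pdef S_def by (rule sum_reindex[OF vp si p])
    finally show ?thesis by simp
  qed
  have musym: "\<mu> (\<pi> j) = \<mu> j" if p: "\<pi> permutes {..<n}" and j: "j < n" for \<pi> j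
  proof -
    have "\<mu> j = (\<Sum>\<theta>\<in>S. (\<lambda>\<theta>. pmf q \<theta> * \<rho> (\<theta> ! (\<pi> j))) (perm_act \<pi> \<theta>))"
      unfolding \<mu>_def
      by (rule sum.cong, simp, simp add: pmf_perm[OF si p] len perm_act_app p j)
    also have "\<dots> = \<mu> (\<pi> j)" unfolding \<mu>_def S_def by (rule sum_reindex[OF vp si p])
    finally show ?thesis by simp
  qed
  have tp: "Transposition.transpose a b permutes {..<n}" "Transposition.transpose a b ` {..<k} = {..<k}" if "a < k" "b < k" for a b
  proof -
    show "Transposition.transpose a b permutes {..<n}" using that kn by (intro permutes_swap_id) auto
    have "Transposition.transpose a b permutes {..<k}" using that by (intro permutes_swap_id) auto
    thus "Transposition.transpose a b ` {..<k} = {..<k}" by (rule permutes_image)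
  qed
  have tpn: "Transposition.transpose a b permutes {..<n}" if "a < n" "b < n" for a b
    using that by (intro permutes_swap_id) auto
  have colsum: "(\<Sum>i<k. M i j) = \<mu> j" for j
  proof -
    have "(\<Sum>i<k. M i j) = (\<Sum>\<theta>\<in>S. pmf q \<theta> * (\<Sum>i<k. \<phi> \<theta> i) * \<rho> (\<theta> ! j))"
      unfolding M_def by (subst sum.swap) (simp add: sum_distrib_left sum_distrib_right mult.assoc)
    also have "\<dots> = \<mu> j" unfolding \<mu>_def by (rule sum.cong) (auto simp: sch)
    finally show ?thesis .
  qed
  have mueq: "\<mu> j = \<mu> 0" if "j < n" for j
    using musym[OF tpn[of 0 j] that] that kn k2 by simp
  have Psum: "(\<Sum>i<k. P i) = 1"
  proof -
    have "(\<Sum>i<k. P i) = (\<Sum>\<theta>\<in>S. pmf q \<theta> * (\<Sum>i<k. \<phi> \<theta> i))"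
      unfolding Pdef by (subst sum.swap) (simp add: sum_distrib_left)
    also have "\<dots> = (\<Sum>\<theta>\<in>S. pmf q \<theta>)" by (rule sum.cong) (auto simp: sch)
    also have "\<dots> = 1" unfolding S_def using finS S_def by (intro sum_pmf_eq_1) auto
    finally show ?thesis .
  qed
  have Peq: "P i = P 0" if "i < k" for i
    using Psym[OF tp[of 0 i], of 0] that k2 by simp
  have "(\<Sum>i<k. P i) = (\<Sum>i<k. P 0)" by (rule sum.cong[OF refl], rule Peq, simp)
  hence "(\<Sum>i<k. P i) = k * P 0" by simp
  hence P0: "P 0 = 1 / k" using Psum k2 by (simp add: field_simps)
  have Ppos: "P i > 0" if "i < k" for i using Peq[OF that] P0 k2 by simp
  have Aeq: "M i i = M 0 0" if "i < k" for i
    using Msym[OF tp[of 0 i], of 0 0] that k2 kn by simp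
  have U: "receiver_utility k q \<rho> \<phi> = k * M 0 0"
  proof -
    have "receiver_utility k q \<rho> \<phi> = (\<Sum>i<k. M i i)"
      unfolding receiver_utility_def M_def S_def
      by (subst sum.swap) (simp add: sum_distrib_left mult.assoc)
    also have "\<dots> = (\<Sum>i<k. M 0 0)" by (rule sum.cong[OF refl], rule Aeq, simp)
    also have "\<dots> = k * M 0 0" by simp
    finally show ?thesis .
  qed
  have RE: "rho_E n q \<rho> = \<mu> 0"
  proof -
    have "(\<lambda>i. \<Sum>\<theta>\<in>set_pmf q. pmf q \<theta> * \<rho> (\<theta> ! i)) ` {..<n} = {\<mu> 0}"
    proof -
      have "(\<lambda>i. \<Sum>\<theta>\<in>set_pmf q. pmf q \<theta> * \<rho> (\<theta> ! i)) = \<mu>"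
        unfolding \<mu>_def S_def by simp
      moreover have "\<mu> ` {..<n} = {\<mu> 0}"
      proof
        show "\<mu> ` {..<n} \<subseteq> {\<mu> 0}" using mueq by blast
        show "{\<mu> 0} \<subseteq> \<mu> ` {..<n}" using kn k2 by auto
      qed
      ultimately show ?thesis by (simp only:)
    qed
    thus ?thesis unfolding rho_E_def by simp
  qed
  have pers: "persuasive n k q \<rho> \<phi> \<longleftrightarrow> (\<forall>i<k. \<forall>j<n. M i j \<le> M i i)"
  proof -
    have ce: "cond_exp q \<rho> \<phi> i j = M i j / P i" for i j
      unfolding cond_exp_def M_def P_def S_def by simp
    have dv: "M i j / P i \<le> M i i / P i \<longleftrightarrow> M i j \<le> M i i" if "i < k" for i j
      using Ppos[OF that] by (simp add: divide_le_cancel)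
    show ?thesis unfolding persuasive_def ce P_def[symmetric] using Ppos dv
      by auto
  qed
  show ?thesis
  proof
    assume "persuasive n k q \<rho> \<phi>"
    hence H: "\<And>i j. i<k \<Longrightarrow> j<n \<Longrightarrow> M i j \<le> M i i" using pers by blast
    have "\<mu> 0 = (\<Sum>i<k. M i 0)" using colsum by simp
    also have "\<dots> \<le> (\<Sum>i<k. M 0 0)"
    proof (rule sum_mono)
      fix i assume "i \<in> {..<k}"
      hence i: "i < k" by simp
      have "M i 0 = M 0 i" using Msym[OF tp[of 0 i] _ _, of 0 i] i k2 kn by simp
      also have "\<dots> \<le> M 0 0" using H[of 0 i] i k2 kn by simp
      finally show "M i 0 \<le> M 0 0" .
    qed
    finally show "receiver_utility k q \<rho> \<phi> \<ge> rho_E n q \<rho>" using U RE by simp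
  next
    assume "receiver_utility k q \<rho> \<phi> \<ge> rho_E n q \<rho>"
    hence G: "\<mu> 0 \<le> k * M 0 0" using U RE by simp
    show "persuasive n k q \<rho> \<phi>" unfolding pers
    proof (intro allI impI)
      fix i j assume i: "i < k" and j: "j < n"
      have same: "M l j = M i j" if "l < k" "l \<noteq> j" "i \<noteq> j" for l
      proof -
        have "Transposition.transpose l i j = j" using that by simp
        moreover have "Transposition.transpose l i l = i" by simp
        moreover have "M (Transposition.transpose l i l) (Transposition.transpose l i j) = M l j"
          using Msym[OF tp[of l i] that(1) j] i that(1) by blast
        ultimately show ?thesis by simp
      qed
      show "M i j \<le> M i i"
      proof (cases "j < k")
        case False
        have "(\<Sum>l<k. M l j) = (\<Sum>l<k. M i j)" using False i by (intro sum.cong[OF refl] same) auto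
        hence "(\<Sum>l<k. M l j) = k * M i j" by simp
        hence "k * M i j \<le> k * M 0 0" using colsum[of j] mueq[OF j] G by simp
        thus ?thesis using Aeq[OF i] k2 by simp
      next
        case True
        show ?thesis
        proof (cases "i = j")
          case False
          have "(\<Sum>l<k. M l j) = M j j + (\<Sum>l\<in>{..<k}-{j}. M l j)"
            using True by (simp add: sum.remove)
          also have "(\<Sum>l\<in>{..<k}-{j}. M l j) = (\<Sum>l\<in>{..<k}-{j}. M i j)"
            using False by (intro sum.cong[OF refl] same) auto
          also have "\<dots> = (k - 1) * M i j" using True by simp
          finally have "\<mu> 0 = M 0 0 + (k - 1) * M i j"
            using colsum[of j] mueq[OF j] Aeq[OF True] by simp
          hence "(k - 1) * M i j \<le> (k - 1) * M 0 0" using G k2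
            by (simp add: of_nat_diff algebra_simps)
          thus ?thesis using Aeq[OF i] k2 by simp
        qed simp
      qed
    qed
  qed
qed

end
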